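(* Let $X$ be an extremally disconnected topological space in which every $\Lambda$-set is open, and let $g,f:X\to\mathbb{R}$ be functions such that $f$ is lower semi-contra-continuous, $g$ is upper semi-contra-continuous, and $g\le f$. Then there exists a contra-continuous function $h:X\to\mathbb{R}$ such that $g\le h\le f$.
   Context: A $\Lambda$-set in $X$ is an intersection of open sets. A function $f:X\to\mathbb{R}$ is upper semi-contra-continuous (resp. lower semi-contra-continuous) if $f^{-1}(-\infty,t)$ (resp. $f^{-1}(t,+\infty)$) is closed in $X$ for every real $t$. A function $h:X\to\mathbb{R}$ is contra-continuous if the preimage of every open subset of $\mathbb{R}$ is closed in $X$. $g\le f$ means $g(x)\le f(x)$ for all $x\in X$. *)

theory Defs
  imports "HOL-Analysis.Analysis"
begin

definition extremally_disconnected :: "'a topology \<Rightarrow> bool" where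
  "extremally_disconnected X \<longleftrightarrow> (\<forall>U. openin X U \<longrightarrow> openin X (X closure_of U))"

text \<open>A Lambda-set is an intersection of open sets (the empty intersection being the whole space).\<close>
definition Lambda_set :: "'a topology \<Rightarrow> 'a set \<Rightarrow> bool" where
  "Lambda_set X A \<longleftrightarrow> (\<exists>\<U>. (\<forall>U\<in>\<U>. openin X U) \<and> A = topspace X \<inter> \<Inter>\<U>)"

definition upper_semi_contra_continuous :: "'a topology \<Rightarrow> ('a \<Rightarrow> real) \<Rightarrow> bool" where
  "upper_semi_contra_continuous X f \<longleftrightarrow> (\<forall>t. closedin X {x \<in> topspace X. f x < t})"

definition lower_semi_contra_continuous :: "'a topology \<Rightarrow> ('a \<Rightarrow> real) \<Rightarrow> bool" where
  "lower_semi_contra_continuous X f \<longleftrightarrow> (\<forall>t. closedin X {x \<in> topspace X. t < f x})"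

definition contra_continuous :: "'a topology \<Rightarrow> ('a \<Rightarrow> real) \<Rightarrow> bool" where
  "contra_continuous X h \<longleftrightarrow> (\<forall>U. open U \<longrightarrow> closedin X {x \<in> topspace X. h x \<in> U})"

end

theory Submission
  imports Defs
begin

theorem corollary1:
  fixes X :: "'a topology" and f g :: "'a \<Rightarrow> real"
  assumes "extremally_disconnected X"
    and "\<forall>A. Lambda_set X A \<longrightarrow> openin X A"
    and "lower_semi_contra_continuous X f"
    and "upper_semi_contra_continuous X g"
    and "\<forall>x\<in>topspace X. g x \<le> f x"
  shows "\<exists>h. contra_continuous X h \<and> (\<forall>x\<in>topspace X. g x \<le> h x \<and> h x \<le> f x)"
proof -
  note ed = assms(1)[unfolded extremally_disconnected_def]
  define le where "le x y \<longleftrightarrow> x \<in> topspace X \<and> y \<in> topspace X \<and> (\<forall>U. openin X U \<and> x \<in> U \<longrightarrow> y \<in> U)" for x y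
  define K where "K x = topspace X \<inter> \<Inter>{U. openin X U \<and> x \<in> U}" for x
  have Kopen: "openin X (K x)" for x
  proof -
    have "Lambda_set X (K x)" unfolding Lambda_set_def K_def
      by (rule exI[of _ "{U. openin X U \<and> x \<in> U}"]) simp
    then show ?thesis using assms(2) by simp
  qed
  have Kmem: "y \<in> K x \<longleftrightarrow> (x \<in> topspace X \<longrightarrow> le x y) \<and> y \<in> topspace X" for x y
    unfolding K_def le_def by (auto dest: openin_subset)
  have Kself: "x \<in> topspace X \<Longrightarrow> x \<in> K x" for x using Kmem le_def by auto
  have letr: "le x y \<Longrightarrow> le y z \<Longrightarrow> le x z" for x y z unfolding le_def by blast
  have lerefl: "x \<in> topspace X \<Longrightarrow> le x x" for x unfolding le_def by blast
  have clos: "z \<in> X closure_of S \<longleftrightarrow> z \<in> topspace X \<and> (\<exists>s\<in>S. le z s)" if "S \<subseteq> topspace X" for z S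
  proof
    assume z: "z \<in> X closure_of S"
    then have "z \<in> topspace X" by (simp add: in_closure_of)
    with z Kopen[of z] Kself[of z] obtain s where "s \<in> S" "s \<in> K z"
      unfolding in_closure_of by blast
    then show "z \<in> topspace X \<and> (\<exists>s\<in>S. le z s)" using Kmem \<open>z \<in> topspace X\<close> by blast
  next
    assume "z \<in> topspace X \<and> (\<exists>s\<in>S. le z s)"
    then show "z \<in> X closure_of S" unfolding in_closure_of le_def by blast
  qed
  have closed_down: "closedin X C \<Longrightarrow> le x y \<Longrightarrow> y \<in> C \<Longrightarrow> x \<in> C" for C x y
  proof -
    assume c: "closedin X C" and l: "le x y" and y: "y \<in> C"
    have sub: "C \<subseteq> topspace X" using closedin_subset[OF c] .
    have "x \<in> X closure_of C" using clos[OF sub, of x] l y le_def by blast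
    then show "x \<in> C" using closure_of_eq[of X C] c by simp
  qed
  have gmono: "le x y \<Longrightarrow> g x \<le> g y" for x y
  proof (rule ccontr)
    assume l: "le x y" and "\<not> g x \<le> g y"
    have "y \<in> {z \<in> topspace X. g z < g x}" using l \<open>\<not> g x \<le> g y\<close> le_def by auto
    then show False using closed_down[OF _ l, of "{z \<in> topspace X. g z < g x}"]
      assms(4) unfolding upper_semi_contra_continuous_def by auto
  qed
  have fmono: "le x y \<Longrightarrow> f y \<le> f x" for x y
  proof (rule ccontr)
    assume l: "le x y" and "\<not> f y \<le> f x"
    have "y \<in> {z \<in> topspace X. f x < f z}" using l \<open>\<not> f y \<le> f x\<close> le_def by auto
    then show False using closed_down[OF _ l, of "{z \<in> topspace X. f x < f z}"]
      assms(3) unfolding lower_semi_contra_continuous_def by auto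
  qed
  define E where "E x y \<longleftrightarrow> (\<exists>w. le x w \<and> le y w)" for x y
  have Esym: "E x y \<Longrightarrow> E y x" for x y unfolding E_def by blast
  have Etr: "E x y \<Longrightarrow> E y z \<Longrightarrow> E x z" for x y z
  proof -
    assume "E x y" "E y z"
    then obtain w v where w: "le x w" "le y w" and v: "le y v" "le z v" unfolding E_def by blast
    have x: "x \<in> topspace X" using w le_def by auto
    have sub: "K x \<subseteq> topspace X" using Kmem by auto
    have "y \<in> X closure_of (K x)" using clos[OF sub, of y] w Kmem x le_def by blast
    moreover have "openin X (X closure_of (K x))" using ed Kopen by blast
    ultimately have "v \<in> X closure_of (K x)" using v(1) unfolding le_def by blast
    then obtain u where "u \<in> K x" "le v u" using clos[OF sub, of v] by blast
    then have "le x u" "le z u" using Kmem x letr v(2) by auto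
    then show "E x z" unfolding E_def by blast
  qed
  have Ebound: "E x y \<Longrightarrow> g y \<le> f x" for x y
  proof -
    assume "E x y"
    then obtain w where w: "le x w" "le y w" unfolding E_def by blast
    have "g y \<le> g w" using gmono w by auto
    also have "\<dots> \<le> f w" using assms(5) w le_def by auto
    also have "\<dots> \<le> f x" using fmono w by auto
    finally show ?thesis .
  qed
  define h where "h x = Sup (g ` {y. E x y})" for x
  have Erefl: "x \<in> topspace X \<Longrightarrow> E x x" for x unfolding E_def using lerefl by blast
  have hcong: "E x z \<Longrightarrow> h x = h z" for x z
  proof -
    assume "E x z"
    then have "{y. E x y} = {y. E z y}" using Etr Esym by blast
    then show ?thesis unfolding h_def by simp
  qed
  have hbounds: "g x \<le> h x \<and> h x \<le> f x" if x: "x \<in> topspace X" for x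
  proof -
    have bdd: "bdd_above (g ` {y. E x y})" using Ebound by (auto intro!: bdd_aboveI)
    have ne: "g ` {y. E x y} \<noteq> {}" using Erefl[OF x] by blast
    show ?thesis unfolding h_def
      using cSup_upper[OF _ bdd, of "g x"] Erefl[OF x] cSup_le_iff[OF ne bdd] Ebound by auto
  qed
  have "contra_continuous X h"
    unfolding contra_continuous_def
  proof (intro allI impI)
    fix U :: "real set"
    let ?S = "{x \<in> topspace X. h x \<in> U}"
    have "X closure_of ?S \<subseteq> ?S"
    proof
      fix z assume "z \<in> X closure_of ?S"
      then obtain s where "s \<in> ?S" "le z s" "z \<in> topspace X" using clos[of ?S z] by auto
      then have "E z s" unfolding E_def using lerefl le_def by blast
      then show "z \<in> ?S" using hcong \<open>s \<in> ?S\<close> \<open>z \<in> topspace X\<close> by auto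
    qed
    then show "closedin X ?S" using closure_of_subset_eq by blast
  qed
  then show ?thesis using hbounds by blast
qed

end
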